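(* For $\sigma\in\mathcal{M}^{\rm TF}$, the potential $\Phi_\sigma:=V_{\rm nuc}+\sigma*\log|\cdot|$ is continuous and once continuously differentiable away from the points $x_1,\ldots,x_K$, and $\Phi_\sigma(x)\to0$ as $|x|\to\infty$. More generally, if $\sigma\in L^\infty(\mathbb{R}^2)\cap L^1(\mathbb{R}^2,\log(2+|x|)dx)$ with $0\le\sigma\le1$ and $\int_{\mathbb{R}^2}\sigma<K$, then $$\Big|\Phi_\sigma(x)+\Big(K-\int_{\mathbb{R}^2}\sigma\Big)\log|x|\Big|\to0\quad\text{as }|x|\to\infty.$$
   Context: Let $K\ge1$ be an integer, $x_1,\ldots,x_K\in\mathbb{R}^2$ and $V_{\rm nuc}(x)=-\sum_{i=1}^K\log|x-x_i|$. $\mathcal{M}^{\rm TF}=\{\sigma\in L^\infty(\mathbb{R}^2)\cap L^1(\mathbb{R}^2,\log(2+|x|)dx):0\leq\sigma\leq1,\ \int\sigma=K\}$. *)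

theory Defs
  imports "HOL-Analysis.Analysis"
begin

definition admissible_density :: "(real^2 \<Rightarrow> real) \<Rightarrow> bool" where
  "admissible_density \<sigma> \<longleftrightarrow>
     \<sigma> \<in> borel_measurable lebesgue \<and>
     (\<forall>x. 0 \<le> \<sigma> x \<and> \<sigma> x \<le> 1) \<and>
     integrable lebesgue (\<lambda>x. \<sigma> x * ln (2 + norm x))"

definition M_TF :: "nat \<Rightarrow> (real^2 \<Rightarrow> real) set" where
  "M_TF K = {\<sigma>. admissible_density \<sigma> \<and> integral\<^sup>L lebesgue \<sigma> = real K}"

definition V_nuc :: "nat \<Rightarrow> (nat \<Rightarrow> real^2) \<Rightarrow> real^2 \<Rightarrow> real" where
  "V_nuc K xs x = - (\<Sum>i<K. ln (norm (x - xs i)))"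

definition Phi :: "nat \<Rightarrow> (nat \<Rightarrow> real^2) \<Rightarrow> (real^2 \<Rightarrow> real) \<Rightarrow> real^2 \<Rightarrow> real" where
  "Phi K xs \<sigma> x = V_nuc K xs x + (\<integral>y. \<sigma> y * ln (norm (x - y)) \<partial>lebesgue)"

end

theory Submission
  imports Defs
begin


lemma lborel_reflect: "(lborel :: (real^2) measure) = distr lborel borel (\<lambda>y. t - y)"
proof -
  have "(lborel :: (real^2) measure) = density (distr lborel borel (\<lambda>x. t + (-1) *\<^sub>R x)) (\<lambda>_. \<bar>-1::real\<bar>^DIM(real^2))"
    by (rule lborel_affine) simp
  then show ?thesis by (simp add: density_1)
qed

lemma ball_measure: "0 \<le> r \<Longrightarrow> emeasure lborel (ball (c::real^2) r) = ennreal (pi * r^2)"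
  using emeasure_ball[of r c] by (simp add: unit_ball_vol_2 mult.commute)

definition kinv :: "real^2 \<Rightarrow> real" where
  "kinv z = indicator (ball 0 1) z * inverse (norm z)"

lemma kinv_nonneg: "0 \<le> kinv z" by (simp add: kinv_def)

lemma ball_borel[measurable]: "ball (c::real^2) r \<in> sets borel" by simp

lemma kinv_measurable[measurable]: "kinv \<in> borel_measurable borel"
proof -
  have [measurable]: "ball (0::real^2) 1 \<in> sets borel" by simp
  show ?thesis unfolding kinv_def by measurable
qed

lemma kinv_pointwise:
  "ennreal (kinv z) \<le> (\<Sum>k. ennreal (2^(k+1)) * indicator (ball (0::real^2) ((1/2)^k)) z)"
proof (cases "z \<in> ball 0 1 \<and> z \<noteq> 0")
  case False then show ?thesis by (auto simp: kinv_def)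
next
  case True
  then have z0: "0 < norm z" "norm z < 1" by auto
  obtain n where n: "(1/2::real)^n < norm z" using real_arch_pow_inv[OF z0(1), of "1/2"] by auto
  define m where "m = (LEAST m. (1/2::real)^m \<le> norm z)"
  have m1: "(1/2::real)^m \<le> norm z" unfolding m_def by (rule LeastI[of _ n]) (use n in simp)
  have m0: "m \<noteq> 0" using m1 z0 by (cases m) auto
  then obtain k where k: "m = Suc k" by (cases m) auto
  have k1: "\<not> (1/2::real)^k \<le> norm z" using not_less_Least[of k "\<lambda>m. (1/2::real)^m \<le> norm z"] k m_def by auto
  have "inverse (norm z) \<le> 2^(k+1)"
  proof -
    have "(1/2::real)^(k+1) \<le> norm z" using m1 k by simp
    then have "inverse (norm z) \<le> inverse ((1/2::real)^(k+1))"
      by (intro le_imp_inverse_le) auto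
    then show ?thesis by (simp add: power_one_over)
  qed
  then have "ennreal (kinv z) \<le> ennreal (2^(k+1)) * indicator (ball (0::real^2) ((1/2)^k)) z"
    using True k1 by (auto simp: kinv_def dist_norm intro!: ennreal_leI)
  also have "\<dots> \<le> (\<Sum>k. ennreal (2^(k+1)) * indicator (ball (0::real^2) ((1/2)^k)) z)"
  proof -
    let ?f = "\<lambda>k. ennreal (2^(k+1)) * indicator (ball (0::real^2) ((1/2)^k)) z"
    have "sum ?f {k} \<le> suminf ?f" by (intro sum_le_suminf summableI) auto
    then show ?thesis by (metis (no_types, lifting) add.right_neutral empty_iff finite.emptyI sum.empty sum.insert)
  qed  
  finally show ?thesis .
qed

lemma kinv_nn_integral: "(\<integral>\<^sup>+z. ennreal (kinv z) \<partial>lborel) \<le> ennreal (4*pi)"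
proof -
  have "(\<integral>\<^sup>+z. ennreal (kinv z) \<partial>lborel) \<le>
      (\<integral>\<^sup>+z. (\<Sum>k. ennreal (2^(k+1)) * indicator (ball (0::real^2) ((1/2)^k)) z) \<partial>lborel)"
    by (intro nn_integral_mono kinv_pointwise)
  also have "\<dots> = (\<Sum>k. \<integral>\<^sup>+z. ennreal (2^(k+1)) * indicator (ball (0::real^2) ((1/2)^k)) z \<partial>lborel)"
    by (intro nn_integral_suminf) measurable
  also have "\<dots> = (\<Sum>k. ennreal (2 * pi * (1/2)^k))"
  proof (intro suminf_cong)
    fix k :: nat
    have "(\<integral>\<^sup>+z. ennreal (2^(k+1)) * indicator (ball (0::real^2) ((1/2)^k)) z \<partial>lborel)
        = ennreal (2^(k+1)) * emeasure lborel (ball (0::real^2) ((1/2)^k))"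
      by (simp add: nn_integral_cmult_indicator)
    also have "\<dots> = ennreal (2^(k+1) * (pi * ((1/2)^k)^2))"
      by (simp add: ball_measure ennreal_mult'')
    also have "2^(k+1) * (pi * ((1/2::real)^k)^2) = 2 * pi * (1/2)^k"
    proof -
      have "((1/2::real)^k)^2 = (1/2)^k * (1/2)^k" by (simp add: power2_eq_square)
      moreover have "(2::real)^k * (1/2)^k = 1" by (simp add: power_mult_distrib[symmetric])
      ultimately show ?thesis by (simp add: algebra_simps)
    qed
    finally show "(\<integral>\<^sup>+z. ennreal (2^(k+1)) * indicator (ball (0::real^2) ((1/2)^k)) z \<partial>lborel) = ennreal (2 * pi * (1/2)^k)" .
  qed
  also have "\<dots> = ennreal (\<Sum>k. 2 * pi * (1/2)^k)"
    by (intro suminf_ennreal2) (auto intro: summable_mult summable_geometric)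
  also have "(\<Sum>k. 2 * pi * (1/2::real)^k) = 4 * pi"
    using suminf_mult[of "\<lambda>k. (1/2::real)^k" "2*pi"] suminf_geometric[of "1/2::real"] summable_geometric[of "1/2::real"]
    by simp
  finally show ?thesis .
qed

lemma kinv_integrable: "integrable lborel kinv"
  by (rule integrableI_bounded) (use kinv_nn_integral kinv_nonneg in \<open>auto simp: ennreal_less_top intro: le_less_trans\<close>)




lemma reflect_integrable:
  fixes f :: "real^2 \<Rightarrow> 'b::{banach,second_countable_topology}"
  assumes [measurable]: "f \<in> borel_measurable borel" and "integrable lborel f"
  shows "integrable lborel (\<lambda>y. f (x - y))"
proof -
  have "integrable (distr lborel borel (\<lambda>y. x - y)) f"
    by (subst lborel_reflect[symmetric]) (rule assms(2))
  then show ?thesis by (subst (asm) integrable_distr_eq) auto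
qed

lemma reflect_integral:
  fixes f :: "real^2 \<Rightarrow> 'b::{banach,second_countable_topology}"
  assumes [measurable]: "f \<in> borel_measurable borel"
  shows "(\<integral>y. f (x - y) \<partial>lborel) = integral\<^sup>L lborel f"
proof -
  have "integral\<^sup>L lborel f = integral\<^sup>L (distr lborel borel (\<lambda>y. x - y)) f"
    by (subst lborel_reflect[symmetric]) (rule refl)
  also have "\<dots> = (\<integral>y. f (x - y) \<partial>lborel)" by (rule integral_distr) auto
  finally show ?thesis ..
qed

definition kr :: "real \<Rightarrow> real^2 \<Rightarrow> real" where
  "kr r z = indicator (ball 0 r) z * inverse (norm z)"

lemma kr_measurable[measurable]: "kr r \<in> borel_measurable borel"
  unfolding kr_def by measurable

lemma kr_nonneg: "0 \<le> kr r z" by (simp add: kr_def)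

lemma kr_le_kinv: "r \<le> 1 \<Longrightarrow> kr r z \<le> kinv z"
  by (auto simp: kr_def kinv_def indicator_def)

lemma kr_integrable: "r \<le> 1 \<Longrightarrow> integrable lborel (kr r)"
  by (rule Bochner_Integration.integrable_bound[OF kinv_integrable]) (auto simp: kr_nonneg kinv_nonneg kr_le_kinv)

lemma kr_small: assumes "0 < e" shows "\<exists>r>0. r \<le> 1 \<and> integral\<^sup>L lborel (kr r) < e"
proof -
  have "((\<lambda>t. integral\<^sup>L lborel (kr (1 / max 1 t))) \<longlongrightarrow> integral\<^sup>L lborel (\<lambda>_::real^2. 0::real)) at_top"
  proof (rule integral_dominated_convergence_at_top[where w=kinv and M=lborel and s="\<lambda>t. kr (1 / max 1 t)" and f="\<lambda>_::real^2. 0::real"])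
    show "AE z in lborel. ((\<lambda>t. kr (1 / max 1 t) z) \<longlongrightarrow> 0) at_top"
    proof (rule AE_I2)
      fix z :: "real^2"
      show "((\<lambda>t. kr (1 / max 1 t) z) \<longlongrightarrow> 0) at_top"
      proof (cases "z = 0")
        case True then show ?thesis by (simp add: kr_def)
      next
        case False
        have "eventually (\<lambda>t. kr (1 / max 1 t) z = 0) at_top"
          using eventually_ge_at_top[of "max 1 (1 / norm z)"]
        proof eventually_elim
          case (elim t)
          then have "1 / max 1 t \<le> norm z" using False
            by (auto simp: field_simps)
          then show ?case by (auto simp: kr_def)
        qed
        then show ?thesis by (rule tendsto_eventually)
      qed
    qed
    show "\<forall>\<^sub>F t in at_top. AE z in lborel. norm (kr (1 / max 1 t) z) \<le> kinv z"
      by (intro always_eventually allI AE_I2) (auto simp: kr_nonneg kr_le_kinv)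
  qed (auto simp: kinv_integrable)
  then have "eventually (\<lambda>t. integral\<^sup>L lborel (kr (1 / max 1 t)) < e) at_top"
    using assms by (auto simp: order_tendsto_iff)
  then obtain t where "integral\<^sup>L lborel (kr (1 / max 1 t)) < e"
    by (auto dest: eventually_happens)
  then show ?thesis by (intro exI[of _ "1 / max 1 t"]) auto
qed

lemma ln_abs_le_inverse: "(0::real) \<le> r \<Longrightarrow> r < 1 \<Longrightarrow> \<bar>ln r\<bar> \<le> inverse r"
proof (cases "r = 0")
  case False
  assume "0 \<le> r" "r < 1"
  with False have "0 < r" by linarith
  have "ln (inverse r) \<le> inverse r - 1" using \<open>0 < r\<close> by (intro ln_le_minus_one) auto
  then show ?thesis using \<open>0 < r\<close> \<open>r < 1\<close> by (simp add: ln_inverse)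
qed simp




lemma continuous_param_integral:
  fixes f :: "real^2 \<Rightarrow> real^2 \<Rightarrow> 'b::{banach,second_countable_topology}"
  assumes meas: "\<And>x. f x \<in> borel_measurable borel"
    and cont: "\<And>y. continuous_on UNIV (\<lambda>x. f x y)"
    and w: "integrable lborel w" and bd: "\<And>x y. norm (f x y) \<le> w y"
  shows "continuous_on UNIV (\<lambda>x. \<integral>y. f x y \<partial>lborel)"
proof (rule continuous_on_sequentiallyI)
  fix u :: "nat \<Rightarrow> real^2" and a assume u: "u \<longlonglongrightarrow> a"
  show "(\<lambda>n. \<integral>y. f (u n) y \<partial>lborel) \<longlonglongrightarrow> (\<integral>y. f a y \<partial>lborel)"
  proof (rule integral_dominated_convergence[where w=w])
    show "AE y in lborel. (\<lambda>n. f (u n) y) \<longlonglongrightarrow> f a y"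
      by (intro AE_I2 continuous_on_tendsto_compose[OF cont u]) auto
  qed (auto simp: meas w bd)
qed

lemma kr_mono_integral: "r \<le> s \<Longrightarrow> s \<le> 1 \<Longrightarrow> integral\<^sup>L lborel (kr r) \<le> integral\<^sup>L lborel (kr s)"
  by (intro integral_mono kr_integrable) (auto simp: kr_def indicator_def)

definition kvec :: "real^2 \<Rightarrow> real^2" where
  "kvec z = inverse (norm z ^ 2) *\<^sub>R z"

definition kd :: "real \<Rightarrow> real^2 \<Rightarrow> real^2" where
  "kd d z = inverse ((max (norm z) d)^2) *\<^sub>R z"

lemma kvec_measurable[measurable]: "kvec \<in> borel_measurable borel"
  unfolding kvec_def by measurable

lemma kd_measurable[measurable]: "kd d \<in> borel_measurable borel"
  unfolding kd_def by measurable

lemma norm_kvec: "norm (kvec z) = inverse (norm z)"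
  by (cases "z = 0") (auto simp: kvec_def power2_eq_square)

lemma norm_kd: assumes "0 < d" shows "norm (kd d z) \<le> inverse d"
proof -
  have "norm (kd d z) = norm z / (max (norm z) d)^2" by (simp add: kd_def field_simps)
  also have "\<dots> \<le> max (norm z) d / (max (norm z) d)^2"
    using assms by (intro divide_right_mono) auto
  also have "\<dots> = inverse (max (norm z) d)" using assms by (simp add: power2_eq_square field_simps)
  also have "\<dots> \<le> inverse d" using assms by (intro le_imp_inverse_le) auto
  finally show ?thesis .
qed

lemma continuous_kd: assumes "0 < d" shows "continuous_on UNIV (kd d)"
  unfolding kd_def using assms
  by (intro continuous_intros) (auto simp: max_def)

lemma kvec_kd_diff: assumes "0 < d" shows "norm (kvec z - kd d z) \<le> 2 * kr d z"
proof (cases "norm z < d")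
  case False
  then have "kvec z = kd d z" by (simp add: kvec_def kd_def max_def)
  then show ?thesis by (simp add: kr_nonneg)
next
  case True
  show ?thesis
  proof (cases "z = 0")
    case True then show ?thesis by (simp add: kvec_def kd_def kr_def)
  next
    case False
    have "norm (kvec z - kd d z) \<le> norm (kvec z) + norm (kd d z)" by (rule norm_triangle_ineq4)
    also have "\<dots> \<le> inverse (norm z) + inverse d" using norm_kd[OF assms, of z] by (simp add: norm_kvec)
    also have "inverse d \<le> inverse (norm z)" using True False by (intro le_imp_inverse_le) auto
    then have "inverse (norm z) + inverse d \<le> 2 * inverse (norm z)" by simp
    also have "\<dots> = 2 * kr d z" using True by (simp add: kr_def dist_norm)
    finally show ?thesis by simp
  qed
qed


locale dens =
  fixes \<sigma> :: "real^2 \<Rightarrow> real"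
  assumes sm[measurable]: "\<sigma> \<in> borel_measurable borel"
    and s0: "\<And>x. 0 \<le> \<sigma> x" and s1: "\<And>x. \<sigma> x \<le> 1"
    and sint: "integrable lborel (\<lambda>x. \<sigma> x * ln (2 + norm x))"
begin

lemma sig_int: "integrable lborel \<sigma>"
proof -
  have "integrable lborel (\<lambda>x. \<sigma> x * ln (2 + norm x) / ln 2)"
    using sint by (rule integrable_divide)
  then show ?thesis
  proof (rule Bochner_Integration.integrable_bound)
    show "AE x in lborel. norm (\<sigma> x) \<le> norm (\<sigma> x * ln (2 + norm x) / ln 2)"
    proof (rule AE_I2)
      fix x :: "real^2"
      have "ln 2 \<le> ln (2 + norm x)" using norm_ge_zero[of x] by (subst ln_le_cancel_iff) linarith+
      then have "1 \<le> ln (2 + norm x) / ln 2" by simp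
      then have "\<sigma> x * 1 \<le> \<sigma> x * (ln (2 + norm x) / ln 2)" using s0[of x] by (intro mult_left_mono) auto
      moreover have "0 \<le> \<sigma> x * (ln (2 + norm x) / ln 2)" using s0[of x] by simp
      ultimately show "norm (\<sigma> x) \<le> norm (\<sigma> x * ln (2 + norm x) / ln 2)" using s0[of x] by simp
    qed
  qed simp
qed

definition C0 :: real where "C0 = integral\<^sup>L lborel kinv + integral\<^sup>L lborel \<sigma>"

lemma U_pointwise: "\<sigma> y * inverse (norm (w - y)) \<le> kinv (w - y) + \<sigma> y"
proof (cases "norm (w - y) < 1")
  case True
  have "\<sigma> y * inverse (norm (w - y)) \<le> 1 * inverse (norm (w - y))"
    using s1[of y] by (intro mult_right_mono) auto
  also have "\<dots> = kinv (w - y)" using True by (simp add: kinv_def)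
  finally show ?thesis using s0[of y] by simp
next
  case False
  have "\<sigma> y * inverse (norm (w - y)) \<le> \<sigma> y * 1"
    using s0[of y] False by (intro mult_left_mono) (auto simp: inverse_le_1_iff)
  then show ?thesis using kinv_nonneg[of "w - y"] by simp
qed

lemma U_integrable: "integrable lborel (\<lambda>y. \<sigma> y * inverse (norm (w - y)))"
proof (rule Bochner_Integration.integrable_bound)
  have "integrable lborel (\<lambda>y. kinv (w - y))" by (rule reflect_integrable) (auto simp: kinv_integrable)
  then show "integrable lborel (\<lambda>y. kinv (w - y) + \<sigma> y)"
    by (intro Bochner_Integration.integrable_add sig_int)
  show "AE y in lborel. norm (\<sigma> y * inverse (norm (w - y))) \<le> norm (kinv (w - y) + \<sigma> y)"
    using U_pointwise s0 kinv_nonneg by (intro AE_I2) (auto simp: abs_mult intro: order_trans[OF _ abs_ge_self])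
qed simp

lemma U_bound: "(\<integral>y. \<sigma> y * inverse (norm (w - y)) \<partial>lborel) \<le> C0"
proof -
  have ki: "integrable lborel (\<lambda>y. kinv (w - y))" by (rule reflect_integrable) (auto simp: kinv_integrable)
  have "(\<integral>y. \<sigma> y * inverse (norm (w - y)) \<partial>lborel) \<le> (\<integral>y. kinv (w - y) + \<sigma> y \<partial>lborel)"
    by (intro integral_mono U_integrable Bochner_Integration.integrable_add sig_int ki U_pointwise)
  also have "\<dots> = C0"
    by (subst Bochner_Integration.integral_add) (auto simp: C0_def reflect_integral intro!: sig_int ki)
  finally show ?thesis .
qed

definition G :: "real^2 \<Rightarrow> real^2" where
  "G w = (\<integral>y. \<sigma> y *\<^sub>R kvec (w - y) \<partial>lborel)"

definition Gd :: "real \<Rightarrow> real^2 \<Rightarrow> real^2" where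
  "Gd d w = (\<integral>y. \<sigma> y *\<^sub>R kd d (w - y) \<partial>lborel)"

lemma G_integrable: "integrable lborel (\<lambda>y. \<sigma> y *\<^sub>R kvec (w - y))"
  by (rule Bochner_Integration.integrable_bound[OF U_integrable[of w]])
     (auto simp: norm_kvec s0 abs_mult)

lemma Gd_integrable: assumes "0 < d" shows "integrable lborel (\<lambda>y. \<sigma> y *\<^sub>R kd d (w - y))"
proof (rule Bochner_Integration.integrable_bound)
  show "integrable lborel (\<lambda>y. \<sigma> y * inverse d)" by (intro integrable_mult_left sig_int)
  show "AE y in lborel. norm (\<sigma> y *\<^sub>R kd d (w - y)) \<le> norm (\<sigma> y * inverse d)"
    using norm_kd[OF assms] s0 assms by (intro AE_I2) (auto simp: abs_mult intro!: mult_left_mono)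
qed simp

lemma Gd_cont: assumes "0 < d" shows "continuous_on UNIV (Gd d)"
  unfolding Gd_def
proof (rule continuous_param_integral[where w="\<lambda>y. \<sigma> y * inverse d"])
  show "integrable lborel (\<lambda>y. \<sigma> y * inverse d)" by (intro integrable_mult_left sig_int)
  show "norm (\<sigma> y *\<^sub>R kd d (x - y)) \<le> \<sigma> y * inverse d" for x y
    using norm_kd[OF assms] s0 assms by (auto simp: abs_mult intro!: mult_left_mono)
  show "continuous_on UNIV (\<lambda>x. \<sigma> y *\<^sub>R kd d (x - y))" for y
    by (intro continuous_intros continuous_on_compose2[OF continuous_kd[OF assms]]) auto
qed simp

lemma G_Gd_dist: assumes "0 < d" "d \<le> 1" shows "dist (Gd d w) (G w) \<le> 2 * integral\<^sup>L lborel (kr d)"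
proof -
  have "Gd d w - G w = (\<integral>y. \<sigma> y *\<^sub>R kd d (w - y) - \<sigma> y *\<^sub>R kvec (w - y) \<partial>lborel)"
    unfolding Gd_def G_def by (rule Bochner_Integration.integral_diff[symmetric]) (auto intro: G_integrable Gd_integrable assms)
  then have "dist (Gd d w) (G w) = norm (\<integral>y. \<sigma> y *\<^sub>R (kd d (w - y) - kvec (w - y)) \<partial>lborel)"
    by (simp add: dist_norm scaleR_diff_right)
  also have "\<dots> \<le> (\<integral>y. 2 * kr d (w - y) \<partial>lborel)"
  proof (rule Bochner_Integration.integral_norm_bound_integral)
    show "integrable lborel (\<lambda>y. \<sigma> y *\<^sub>R (kd d (w - y) - kvec (w - y)))"
      using Bochner_Integration.integrable_diff[OF Gd_integrable[OF assms(1)] G_integrable] by (simp add: scaleR_diff_right)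
    show "integrable lborel (\<lambda>y. 2 * kr d (w - y))"
      by (intro integrable_mult_right reflect_integrable kr_integrable assms) auto
    show "norm (\<sigma> y *\<^sub>R (kd d (w - y) - kvec (w - y))) \<le> 2 * kr d (w - y)" for y
    proof -
      have "norm (\<sigma> y *\<^sub>R (kd d (w - y) - kvec (w - y))) = \<sigma> y * norm (kvec (w - y) - kd d (w - y))"
        using s0[of y] by (simp add: norm_minus_commute)
      also have "\<dots> \<le> 1 * (2 * kr d (w - y))"
        using s0[of y] s1[of y] kvec_kd_diff[OF assms(1)] by (intro mult_mono) auto
      finally show ?thesis by simp
    qed
  qed
  also have "\<dots> = 2 * integral\<^sup>L lborel (kr d)" by (simp add: reflect_integral)
  finally show ?thesis .
qed

lemma G_cont: "continuous_on UNIV G"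
proof (rule uniform_limit_theorem)
  show "\<forall>\<^sub>F n in sequentially. continuous_on UNIV (Gd (1 / Suc n))"
    by (intro always_eventually allI Gd_cont) auto
  show "uniform_limit UNIV (\<lambda>n. Gd (1 / Suc n)) G sequentially"
  proof (rule uniform_limitI)
    fix e :: real assume "0 < e"
    then obtain r where r: "0 < r" "r \<le> 1" "integral\<^sup>L lborel (kr r) < e / 2"
      using kr_small[of "e/2"] by auto
    obtain N :: nat where N: "inverse r < N" using reals_Archimedean2 by blast
    show "\<forall>\<^sub>F n in sequentially. \<forall>x\<in>UNIV. dist (Gd (1 / Suc n) x) (G x) < e"
    proof (rule eventually_sequentiallyI[of N], intro ballI)
      fix n x assume n: "N \<le> n"
      have "1 / real (Suc n) \<le> r"
      proof -
        have "inverse r < Suc n" using N n by linarith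
        then show ?thesis using r by (simp add: field_simps)
      qed
      then have "integral\<^sup>L lborel (kr (1 / Suc n)) \<le> integral\<^sup>L lborel (kr r)"
        using r by (intro kr_mono_integral) auto
      moreover have "dist (Gd (1 / Suc n) x) (G x) \<le> 2 * integral\<^sup>L lborel (kr (1 / Suc n))"
        by (rule G_Gd_dist) auto
      ultimately show "dist (Gd (1 / Suc n) x) (G x) < e" using r by linarith
    qed
  qed
qed auto

end



lemma kvec_inner_eq: "s * (h \<bullet> sgn v) * inverse (norm v) = (kvec v \<bullet> h) * s"
  by (simp add: kvec_def sgn_div_norm power2_eq_square inner_commute divide_inverse)

lemma deriv_ln_norm:
  fixes x h y :: "real^2"
  assumes "x + t *\<^sub>R h - y \<noteq> 0"
  shows "((\<lambda>t. ln (norm (x + t *\<^sub>R h - y))) has_real_derivative (kvec (x + t *\<^sub>R h - y) \<bullet> h)) (at t within S)"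
proof -
  let ?v = "x + t *\<^sub>R h - y"
  have 1: "((\<lambda>t. x + t *\<^sub>R h - y) has_derivative (\<lambda>s. s *\<^sub>R h)) (at t within S)"
    by (auto intro!: derivative_eq_intros)
  have 2: "((\<lambda>t. norm (x + t *\<^sub>R h - y)) has_derivative (\<lambda>s. (s *\<^sub>R h) \<bullet> sgn ?v)) (at t within S)"
    using has_derivative_compose[OF 1 has_derivative_norm[OF assms]] by simp
  have 3: "((\<lambda>t. ln (norm (x + t *\<^sub>R h - y))) has_derivative (\<lambda>s. s * (h \<bullet> sgn ?v) * inverse (norm ?v))) (at t within S)"
    using has_derivative_ln[OF _ 2] assms by simp
  have e: "(\<lambda>s. s * (h \<bullet> sgn ?v) * inverse (norm ?v)) = (*) (kvec ?v \<bullet> h)"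
    by (rule ext) (simp only: kvec_inner_eq)
  show ?thesis unfolding has_field_derivative_def
    using 3 unfolding e .
qed

lemma line_AE:
  fixes x h :: "real^2"
  shows "AE y in lborel. \<forall>t::real. x + t *\<^sub>R h - y \<noteq> 0"
proof -
  have "negligible (span {h})"
    by (rule negligible_lowdim) (auto simp: dim_singleton)
  then have "negligible ((+) x ` span {h})" by (rule negligible_translation)
  then have "(+) x ` span {h} \<in> null_sets lebesgue" by (simp add: negligible_iff_null_sets)
  then have "AE y in lebesgue. y \<notin> (+) x ` span {h}" by (rule AE_not_in)
  then have "AE y in lborel. y \<notin> (+) x ` span {h}" by (simp add: AE_completion_iff)
  then show ?thesis
  proof (rule AE_mp, intro AE_I2 impI allI notI)
    fix y t assume "y \<notin> (+) x ` span {h}" "x + t *\<^sub>R h - y = 0"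
    then have "y = x + t *\<^sub>R h" by (simp add: algebra_simps)
    moreover have "t *\<^sub>R h \<in> span {h}" by (intro span_mul span_base) auto
    ultimately show False using \<open>y \<notin> _\<close> by auto
  qed
qed

context dens
begin

definition N :: "real^2 \<Rightarrow> real" where
  "N x = (\<integral>y. \<sigma> y * ln (norm (x - y)) \<partial>lborel)"

lemma N_pointwise:
  "\<bar>\<sigma> y * ln (norm (x - y))\<bar> \<le> kinv (x - y) + \<sigma> y * ln (2 + norm x) + \<sigma> y * ln (2 + norm y)"
proof -
  have l1: "0 \<le> \<sigma> y * ln (2 + norm x)" "0 \<le> \<sigma> y * ln (2 + norm y)"
    using s0[of y] by simp_all
  show ?thesis
  proof (cases "norm (x - y) < 1")
    case True
    have "\<bar>\<sigma> y * ln (norm (x - y))\<bar> = \<sigma> y * \<bar>ln (norm (x - y))\<bar>" using s0[of y] by (simp add: abs_mult)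
    also have "\<dots> \<le> 1 * inverse (norm (x - y))"
      using s0[of y] s1[of y] ln_abs_le_inverse[of "norm (x - y)"] True by (intro mult_mono) auto
    also have "\<dots> = kinv (x - y)" using True by (simp add: kinv_def)
    finally show ?thesis using l1 by linarith
  next
    case False
    then have p: "0 \<le> ln (norm (x - y))" by simp
    have "norm (x - y) \<le> (2 + norm x) * (2 + norm y)"
    proof -
      have "norm (x - y) \<le> norm x + norm y" by (rule norm_triangle_ineq4)
      also have "\<dots> \<le> (2 + norm x) * (2 + norm y)" by (simp add: algebra_simps add_increasing)
      finally show ?thesis .
    qed
    then have "ln (norm (x - y)) \<le> ln ((2 + norm x) * (2 + norm y))"
      using False by (subst ln_le_cancel_iff) (auto intro: add_pos_nonneg)
    also have "\<dots> = ln (2 + norm x) + ln (2 + norm y)"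
      by (intro ln_mult_pos) (auto intro: add_pos_nonneg)
    finally have "\<sigma> y * ln (norm (x - y)) \<le> \<sigma> y * (ln (2 + norm x) + ln (2 + norm y))"
      using s0[of y] by (intro mult_left_mono) auto
    then show ?thesis using p s0[of y] kinv_nonneg[of "x - y"] by (simp add: abs_mult algebra_simps)
  qed
qed

lemma N_integrable: "integrable lborel (\<lambda>y. \<sigma> y * ln (norm (x - y)))"
proof (rule Bochner_Integration.integrable_bound)
  have ki: "integrable lborel (\<lambda>y. kinv (x - y))" by (rule reflect_integrable) (auto simp: kinv_integrable)
  show "integrable lborel (\<lambda>y. kinv (x - y) + \<sigma> y * ln (2 + norm x) + \<sigma> y * ln (2 + norm y))"
    by (intro Bochner_Integration.integrable_add ki sint integrable_mult_left sig_int)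
  show "AE y in lborel. norm (\<sigma> y * ln (norm (x - y))) \<le> norm (kinv (x - y) + \<sigma> y * ln (2 + norm x) + \<sigma> y * ln (2 + norm y))"
    by (intro AE_I2) (auto intro: order_trans[OF N_pointwise abs_ge_self])
qed simp

lemma inner_int: "integrable lborel (\<lambda>y. \<sigma> y * (kvec (w - y) \<bullet> h))"
proof (rule Bochner_Integration.integrable_bound)
  show "integrable lborel (\<lambda>y. \<sigma> y * inverse (norm (w - y)) * norm h)"
    by (intro integrable_mult_left U_integrable)
  show "AE y in lborel. norm (\<sigma> y * (kvec (w - y) \<bullet> h)) \<le> norm (\<sigma> y * inverse (norm (w - y)) * norm h)"
  proof (intro AE_I2)
    fix y
    have "\<bar>kvec (w - y) \<bullet> h\<bar> \<le> inverse (norm (w - y)) * norm h"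
      using Cauchy_Schwarz_ineq2[of "kvec (w - y)" h] by (simp add: norm_kvec)
    then show "norm (\<sigma> y * (kvec (w - y) \<bullet> h)) \<le> norm (\<sigma> y * inverse (norm (w - y)) * norm h)"
      using s0[of y] by (simp add: abs_mult mult.assoc mult_left_mono)
  qed
qed simp

lemma inner_bd: "(\<integral>y. norm (\<sigma> y * (kvec (w - y) \<bullet> h)) \<partial>lborel) \<le> norm h * C0"
proof -
  have "(\<integral>y. norm (\<sigma> y * (kvec (w - y) \<bullet> h)) \<partial>lborel) \<le> (\<integral>y. \<sigma> y * inverse (norm (w - y)) * norm h \<partial>lborel)"
  proof (intro integral_mono integrable_norm inner_int integrable_mult_left U_integrable)
    fix y
    have "\<bar>kvec (w - y) \<bullet> h\<bar> \<le> inverse (norm (w - y)) * norm h"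
      using Cauchy_Schwarz_ineq2[of "kvec (w - y)" h] by (simp add: norm_kvec)
    then show "norm (\<sigma> y * (kvec (w - y) \<bullet> h)) \<le> \<sigma> y * inverse (norm (w - y)) * norm h"
      using s0[of y] by (simp add: abs_mult mult.assoc mult_left_mono)
  qed
  also have "\<dots> = norm h * (\<integral>y. \<sigma> y * inverse (norm (w - y)) \<partial>lborel)"
    by (simp add: mult.commute)
  also have "\<dots> \<le> norm h * C0" by (intro mult_left_mono U_bound) auto
  finally show ?thesis .
qed

lemma G_inner: "G w \<bullet> h = (\<integral>y. \<sigma> y * (kvec (w - y) \<bullet> h) \<partial>lborel)"
  unfolding G_def by (subst integral_inner_left[symmetric]) (auto simp: G_integrable)


lemma FTC_line:
  fixes x h y :: "real^2"
  assumes ne: "\<forall>t::real. x + t *\<^sub>R h - y \<noteq> 0"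
  shows "ln (norm (x + h - y)) - ln (norm (x - y)) = (\<integral>t. indicator {0..1} t * (kvec (x + t *\<^sub>R h - y) \<bullet> h) \<partial>lborel)"
proof -
  have "(\<integral>t. indicator {0..1} t *\<^sub>R (kvec (x + t *\<^sub>R h - y) \<bullet> h) \<partial>lborel)
      = ln (norm (x + 1 *\<^sub>R h - y)) - ln (norm (x + 0 *\<^sub>R h - y))"
  proof (rule integral_FTC_atLeastAtMost[where F="\<lambda>t. ln (norm (x + t *\<^sub>R h - y))"])
    show "((\<lambda>t. ln (norm (x + t *\<^sub>R h - y))) has_vector_derivative kvec (x + t *\<^sub>R h - y) \<bullet> h) (at t within {0..1})" for t
      using deriv_ln_norm[OF ne[rule_format, of t]] by (simp add: has_real_derivative_iff_has_vector_derivative)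
    show "continuous_on {0..1} (\<lambda>t. kvec (x + t *\<^sub>R h - y) \<bullet> h)"
      unfolding kvec_def using ne by (intro continuous_intros) auto
  qed simp
  then show ?thesis by simp
qed

lemma N_diff: "N (x + h) - N x = (\<integral>t. indicator {0..1} t * (G (x + t *\<^sub>R h) \<bullet> h) \<partial>lborel)"
proof -
  define F where "F t y = indicator {0..1} t * (\<sigma> y * (kvec (x + t *\<^sub>R h - y) \<bullet> h))" for t :: real and y :: "real^2"
  have Fm[measurable]: "(\<lambda>(t, y). F t y) \<in> borel_measurable (lborel \<Otimes>\<^sub>M lborel)"
    unfolding F_def by measurable
  have "N (x + h) - N x = (\<integral>y. \<sigma> y * ln (norm (x + h - y)) - \<sigma> y * ln (norm (x - y)) \<partial>lborel)"
    unfolding N_def by (rule Bochner_Integration.integral_diff[symmetric]) (auto intro: N_integrable)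
  also have "\<dots> = (\<integral>y. (\<integral>t. F t y \<partial>lborel) \<partial>lborel)"
  proof (rule integral_cong_AE)
    show "AE y in lborel. \<sigma> y * ln (norm (x + h - y)) - \<sigma> y * ln (norm (x - y)) = (\<integral>t. F t y \<partial>lborel)"
      using line_AE[of x h]
    proof (rule AE_mp, intro AE_I2 impI)
      fix y assume ne: "\<forall>t::real. x + t *\<^sub>R h - y \<noteq> 0"
      have "\<sigma> y * ln (norm (x + h - y)) - \<sigma> y * ln (norm (x - y)) = \<sigma> y * (ln (norm (x + h - y)) - ln (norm (x - y)))"
        by (simp add: algebra_simps)
      also have "\<dots> = \<sigma> y * (\<integral>t. indicator {0..1} t * (kvec (x + t *\<^sub>R h - y) \<bullet> h) \<partial>lborel)"
        using FTC_line[OF ne] by simp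
      also have "\<dots> = (\<integral>t. F t y \<partial>lborel)"
        unfolding F_def by (simp add: algebra_simps)
      finally show "\<sigma> y * ln (norm (x + h - y)) - \<sigma> y * ln (norm (x - y)) = (\<integral>t. F t y \<partial>lborel)" .
    qed
  qed measurable
  also have "\<dots> = (\<integral>t. (\<integral>y. F t y \<partial>lborel) \<partial>lborel)"
  proof (rule lborel_pair.Fubini_integral)
    show "integrable (lborel \<Otimes>\<^sub>M lborel) (\<lambda>(t, y). F t y)"
    proof (rule lborel_pair.Fubini_integrable)
      show "integrable lborel (\<lambda>t. \<integral>y. norm ((\<lambda>(t, y). F t y) (t, y)) \<partial>lborel)"
      proof (rule Bochner_Integration.integrable_bound)
        show "integrable lborel (\<lambda>t::real. indicator {0..1} t * (norm h * C0))"
          by (intro integrable_mult_left integrable_real_indicator) auto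
        show "AE t in lborel. norm (\<integral>y. norm ((\<lambda>(t, y). F t y) (t, y)) \<partial>lborel) \<le> norm (indicator {0..1} t * (norm h * C0))"
        proof (intro AE_I2)
          fix t :: real
          have "(\<integral>y. norm (F t y) \<partial>lborel) = indicator {0..1} t * (\<integral>y. norm (\<sigma> y * (kvec (x + t *\<^sub>R h - y) \<bullet> h)) \<partial>lborel)"
            unfolding F_def by (simp add: abs_mult)
          also have "\<dots> \<le> indicator {0..1} t * (norm h * C0)"
            by (intro mult_left_mono inner_bd) auto
          finally have "(\<integral>y. norm (F t y) \<partial>lborel) \<le> indicator {0..1} t * (norm h * C0)" .
          moreover have "0 \<le> (\<integral>y. norm (F t y) \<partial>lborel)" by simp
          ultimately show "norm (\<integral>y. norm ((\<lambda>(t, y). F t y) (t, y)) \<partial>lborel) \<le> norm (indicator {0..1} t * (norm h * C0))"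
            by simp
        qed
      qed measurable
      show "AE t in lborel. integrable lborel (\<lambda>y. (\<lambda>(t, y). F t y) (t, y))"
        unfolding F_def by (intro AE_I2) (simp add: inner_int)
    qed (rule Fm)
  qed
  also have "\<dots> = (\<integral>t. indicator {0..1} t * (G (x + t *\<^sub>R h) \<bullet> h) \<partial>lborel)"
    unfolding F_def by (simp add: G_inner)
  finally show ?thesis .
qed


lemma G_bound: "norm (G w) \<le> C0"
proof -
  have "norm (G w) \<le> (\<integral>y. norm (\<sigma> y *\<^sub>R kvec (w - y)) \<partial>lborel)"
    unfolding G_def by (rule integral_norm_bound)
  also have "\<dots> = (\<integral>y. \<sigma> y * inverse (norm (w - y)) \<partial>lborel)"
    using s0 by (simp add: norm_kvec)
  also have "\<dots> \<le> C0" by (rule U_bound)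
  finally show ?thesis .
qed

lemma G_meas[measurable]: "G \<in> borel_measurable borel"
  using G_cont by (rule borel_measurable_continuous_onI)

lemma N_deriv: "(N has_derivative (\<lambda>h. G x \<bullet> h)) (at x)"
  unfolding has_derivative_at_alt
proof (intro conjI allI impI)
  show "bounded_linear (\<lambda>h. G x \<bullet> h)" by (rule bounded_linear_inner_right)
  fix e :: real assume "0 < e"
  obtain d where d: "0 < d" "\<And>w. dist w x < d \<Longrightarrow> dist (G w) (G x) < e"
    using G_cont \<open>0 < e\<close> unfolding continuous_on_iff by (metis UNIV_I)
  show "\<exists>d>0. \<forall>y. norm (y - x) < d \<longrightarrow> norm (N y - N x - G x \<bullet> (y - x)) \<le> e * norm (y - x)"
  proof (intro exI[of _ d] conjI allI impI d)
    fix y assume y: "norm (y - x) < d"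
    define h where "h = y - x"
    have yx: "y = x + h" by (simp add: h_def)
    have int1: "integrable lborel (\<lambda>t::real. indicator {0..1} t * (G (x + t *\<^sub>R h) \<bullet> h))"
    proof (rule Bochner_Integration.integrable_bound)
      show "integrable lborel (\<lambda>t::real. indicator {0..1} t * (C0 * norm h))"
        by (intro integrable_mult_left integrable_real_indicator) auto
      show "AE t in lborel. norm (indicator {0..1} t * (G (x + t *\<^sub>R h) \<bullet> h)) \<le> norm (indicator {0..1} t * (C0 * norm h))"
      proof (intro AE_I2)
        fix t :: real
        have "\<bar>G (x + t *\<^sub>R h) \<bullet> h\<bar> \<le> C0 * norm h"
          using Cauchy_Schwarz_ineq2[of "G (x + t *\<^sub>R h)" h] G_bound[of "x + t *\<^sub>R h"]
          by (meson mult_right_mono norm_ge_zero order_trans)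
        then show "norm (indicator {0..1} t * (G (x + t *\<^sub>R h) \<bullet> h)) \<le> norm (indicator {0..1} t * (C0 * norm h))"
          by (auto simp: indicator_def)
      qed
    qed measurable
    have int2: "integrable lborel (\<lambda>t::real. indicator {0..1} t * (G x \<bullet> h))"
      by (intro integrable_mult_left integrable_real_indicator) auto
    have "G x \<bullet> h = (\<integral>t. indicator {0..1::real} t * (G x \<bullet> h) \<partial>lborel)"
      by (simp add: measure_lborel_Icc)
    then have "N y - N x - G x \<bullet> (y - x) = (\<integral>t. indicator {0..1} t * (G (x + t *\<^sub>R h) \<bullet> h) - indicator {0..1} t * (G x \<bullet> h) \<partial>lborel)"
      unfolding yx N_diff h_def[symmetric]
      by (simp add: Bochner_Integration.integral_diff[OF int1 int2])
    also have "norm \<dots> \<le> (\<integral>t. indicator {0..1::real} t * (e * norm h) \<partial>lborel)"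
    proof (rule Bochner_Integration.integral_norm_bound_integral)
      show "integrable lborel (\<lambda>t. indicator {0..1} t * (G (x + t *\<^sub>R h) \<bullet> h) - indicator {0..1} t * (G x \<bullet> h))"
        by (intro Bochner_Integration.integrable_diff int1 int2)
      show "integrable lborel (\<lambda>t::real. indicator {0..1} t * (e * norm h))"
        by (intro integrable_mult_left integrable_real_indicator) auto
      fix t :: real
      show "norm (indicator {0..1} t * (G (x + t *\<^sub>R h) \<bullet> h) - indicator {0..1} t * (G x \<bullet> h)) \<le> indicator {0..1} t * (e * norm h)"
      proof (cases "t \<in> {0..1}")
        case True
        have "dist (x + t *\<^sub>R h) x = \<bar>t\<bar> * norm h" by (simp add: dist_norm)
        also have "\<dots> \<le> norm h" using True by (intro mult_left_le_one_le) auto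
        also have "\<dots> < d" using y h_def by simp
        finally have "dist (G (x + t *\<^sub>R h)) (G x) < e" by (rule d)
        then have "\<bar>(G (x + t *\<^sub>R h) - G x) \<bullet> h\<bar> \<le> e * norm h"
          using Cauchy_Schwarz_ineq2[of "G (x + t *\<^sub>R h) - G x" h]
          by (simp add: dist_norm) (meson less_imp_le mult_right_mono norm_ge_zero order_trans)
        then show ?thesis using True by (simp add: inner_diff_left)
      qed simp
    qed
    also have "\<dots> = e * norm (y - x)" by (simp add: h_def)
    finally show "norm (N y - N x - G x \<bullet> (y - x)) \<le> e * norm (y - x)" .
  qed
qed

end



lemma ln_near_one: fixes u :: real assumes "\<bar>u - 1\<bar> \<le> 1/2" shows "\<bar>ln u\<bar> \<le> 2 * \<bar>u - 1\<bar>"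
proof -
  have u: "1/2 \<le> u" using assms by linarith
  have a: "ln u \<le> u - 1" using u by (intro ln_le_minus_one) auto
  have "ln (inverse u) \<le> inverse u - 1" using u by (intro ln_le_minus_one) auto
  moreover have "ln (inverse u) = - ln u" using u by (simp add: ln_inverse)
  ultimately have "- ln u \<le> inverse u - 1" by simp
  also have "inverse u - 1 = (1 - u) / u" using u by (simp add: field_simps)
  finally have "- ln u \<le> (1 - u) / u" .
  also have "\<dots> \<le> 2 * \<bar>u - 1\<bar>"
  proof (cases "u \<le> 1")
    case True
    have "(1 - u) / u \<le> (1 - u) / (1/2)" using u True by (intro divide_left_mono) auto
    then show ?thesis using True by simp
  next
    case False
    then have "(1 - u) / u \<le> 0" by (simp add: divide_nonpos_pos)
    then show ?thesis by (rule order_trans) simp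
  qed
  finally have b: "- ln u \<le> 2 * \<bar>u - 1\<bar>" .
  have "u - 1 \<le> 2 * \<bar>u - 1\<bar>" by (cases "1 \<le> u") auto
  with a have "ln u \<le> 2 * \<bar>u - 1\<bar>" by (rule order_trans)
  then show ?thesis using b by (rule abs_leI)
qed

lemma ln_mono_le: "0 < (a::real) \<Longrightarrow> a \<le> b \<Longrightarrow> ln a \<le> ln b"
  by simp

context dens begin

lemma D_bound:
  fixes x y :: "real^2"
  assumes r: "1 \<le> \<rho>" "2 * \<rho> \<le> norm x" and e: "0 < \<eta>" "\<eta> \<le> 1"
  shows "\<bar>\<sigma> y * (ln (norm (x - y)) - ln (norm x))\<bar> \<le>
    \<sigma> y * (2 * \<rho> / norm x) + 2 * (\<sigma> y * ln (2 + norm y) * indicator {y. \<rho> \<le> norm y} y)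
    + kr \<eta> (x - y) + \<bar>ln \<eta>\<bar> * (\<sigma> y * indicator {y. norm x - 1 \<le> norm y} y)"
  (is "_ \<le> ?B1 + ?B2 + ?B3 + ?B4")
proof -
  have x: "2 \<le> norm x" "0 < norm x" using r by linarith+
  have nn: "0 \<le> ?B1" "0 \<le> ?B2" "0 \<le> ?B3" "0 \<le> ?B4"
    using s0[of y] x r(1) by (simp_all add: kr_nonneg indicator_def)
  have l2: "0 \<le> ln (2 + norm y)" by simp
  show ?thesis
  proof (cases "norm y < \<rho>")
    case True
    have ny: "norm y \<le> norm x / 2" using True r by linarith
    have d1: "\<bar>norm (x - y) - norm x\<bar> \<le> norm y" using norm_triangle_ineq3[of "x - y" x] by simp
    have pos: "0 < norm (x - y)" using d1 ny x by linarith
    have "norm (x - y) / norm x - 1 = (norm (x - y) - norm x) / norm x"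
      using x by (simp add: diff_divide_distrib)
    then have "\<bar>norm (x - y) / norm x - 1\<bar> = \<bar>norm (x - y) - norm x\<bar> / norm x"
      by (simp add: abs_divide)
    also have "\<dots> \<le> norm y / norm x" using d1 x by (intro divide_right_mono) auto
    finally have u: "\<bar>norm (x - y) / norm x - 1\<bar> \<le> norm y / norm x" .
    have "norm y / norm x \<le> 1/2" using ny x by (simp add: field_simps)
    then have "\<bar>ln (norm (x - y) / norm x)\<bar> \<le> 2 * \<bar>norm (x - y) / norm x - 1\<bar>"
      using u by (intro ln_near_one) linarith
    also have "\<dots> \<le> 2 * \<rho> / norm x"
    proof -
      have "norm y / norm x \<le> \<rho> / norm x" using True x by (intro divide_right_mono) auto
      then show ?thesis using u by simp
    qed
    finally have "\<bar>ln (norm (x - y)) - ln (norm x)\<bar> \<le> 2 * \<rho> / norm x"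
      using pos x by (simp add: ln_div)
    then have "\<sigma> y * \<bar>ln (norm (x - y)) - ln (norm x)\<bar> \<le> ?B1"
      using s0[of y] by (intro mult_left_mono) auto
    moreover have "\<bar>\<sigma> y * (ln (norm (x - y)) - ln (norm x))\<bar> = \<sigma> y * \<bar>ln (norm (x - y)) - ln (norm x)\<bar>"
      using s0[of y] by (simp add: abs_mult)
    ultimately have "\<bar>\<sigma> y * (ln (norm (x - y)) - ln (norm x))\<bar> \<le> ?B1" by simp
    then show ?thesis using nn by linarith
  next
    case False
    then have ind1: "indicator {y. \<rho> \<le> norm y} y = (1::real)" by simp
    show ?thesis
    proof (cases "1 \<le> norm (x - y)")
      case True
      have "norm (x - y) \<le> norm x * (1 + norm y)"
      proof -
        have "norm (x - y) \<le> norm x + norm y" by (rule norm_triangle_ineq4)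
        also have "\<dots> \<le> norm x + norm x * norm y" using x by (simp add: mult_le_cancel_right1)
        finally show ?thesis by (simp add: algebra_simps)
      qed
      then have "ln (norm (x - y)) \<le> ln (norm x * (1 + norm y))"
        using True by (intro ln_mono_le) auto
      also have "\<dots> = ln (norm x) + ln (1 + norm y)" using x by (intro ln_mult_pos) (auto intro: add_pos_nonneg)
      finally have a: "ln (norm (x - y)) \<le> ln (norm x) + ln (1 + norm y)" .
      have "norm x \<le> norm (x - y) * (1 + norm y)"
      proof -
        have "norm x \<le> norm (x - y) + norm y" by (metis norm_triangle_sub add.commute)
        also have "\<dots> \<le> norm (x - y) + norm (x - y) * norm y" using True by (simp add: mult_le_cancel_right1)
        finally show ?thesis by (simp add: algebra_simps)
      qed
      then have "ln (norm x) \<le> ln (norm (x - y) * (1 + norm y))"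
        using x by (intro ln_mono_le) auto
      also have "\<dots> = ln (norm (x - y)) + ln (1 + norm y)" using True by (intro ln_mult_pos) (auto intro: add_pos_nonneg)
      finally have b: "ln (norm x) \<le> ln (norm (x - y)) + ln (1 + norm y)" .
      have c: "ln (1 + norm y) \<le> ln (2 + norm y)" by (intro ln_mono_le) (auto intro: add_pos_nonneg)
      have "\<bar>ln (norm (x - y)) - ln (norm x)\<bar> \<le> ln (2 + norm y)" using a b c by linarith
      then have "\<bar>\<sigma> y * (ln (norm (x - y)) - ln (norm x))\<bar> \<le> \<sigma> y * ln (2 + norm y)"
        using s0[of y] by (simp add: abs_mult mult_left_mono)
      also have "\<dots> \<le> ?B2" using ind1 s0[of y] l2 by simp
      finally show ?thesis using nn by linarith
    next
      case False
      then have near: "norm (x - y) < 1" by simp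
      have "norm x \<le> norm (x - y) + norm y" by (metis norm_triangle_sub add.commute)
      then have nx: "norm x < 1 + norm y" using near by linarith
      then have ind2: "indicator {y. norm x - 1 \<le> norm y} y = (1::real)" by simp
      have lx: "0 \<le> ln (norm x)" "ln (norm x) \<le> ln (2 + norm y)"
        using x nx by (simp, intro ln_mono_le) auto
      have ll: "\<sigma> y * \<bar>ln (norm (x - y))\<bar> \<le> ?B3 + ?B4"
      proof (cases "norm (x - y) < \<eta>")
        case True
        have "\<sigma> y * \<bar>ln (norm (x - y))\<bar> \<le> 1 * inverse (norm (x - y))"
          using s0[of y] s1[of y] ln_abs_le_inverse[of "norm (x - y)"] near by (intro mult_mono) auto
        also have "\<dots> = ?B3" using True by (simp add: kr_def)
        finally show ?thesis using nn by linarith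
      next
        case False
        have a1: "ln \<eta> \<le> ln (norm (x - y))" using False e by (intro ln_mono_le) auto
        have p0: "0 < norm (x - y)" using False e by linarith
        have "ln (norm (x - y)) \<le> ln 1" using p0 near by (intro ln_mono_le) auto
        then have a2: "ln (norm (x - y)) \<le> 0" by simp
        have "\<bar>ln (norm (x - y))\<bar> \<le> \<bar>ln \<eta>\<bar>" using a1 a2 by linarith
        then have "\<sigma> y * \<bar>ln (norm (x - y))\<bar> \<le> \<sigma> y * \<bar>ln \<eta>\<bar>" using s0[of y] by (intro mult_left_mono) auto
        also have "\<dots> = ?B4" using ind2 by simp
        finally show ?thesis using nn by linarith
      qed
      have "\<bar>ln (norm (x - y)) - ln (norm x)\<bar> \<le> \<bar>ln (norm (x - y))\<bar> + ln (norm x)"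
        using abs_triangle_ineq4[of "ln (norm (x - y))" "ln (norm x)"] lx(1) by simp
      then have "\<sigma> y * \<bar>ln (norm (x - y)) - ln (norm x)\<bar> \<le> \<sigma> y * (\<bar>ln (norm (x - y))\<bar> + ln (norm x))"
        using s0[of y] by (intro mult_left_mono) auto
      moreover have "\<bar>\<sigma> y * (ln (norm (x - y)) - ln (norm x))\<bar> = \<sigma> y * \<bar>ln (norm (x - y)) - ln (norm x)\<bar>"
        by (simp only: abs_mult abs_of_nonneg[OF s0])
      ultimately have "\<bar>\<sigma> y * (ln (norm (x - y)) - ln (norm x))\<bar> \<le> \<sigma> y * \<bar>ln (norm (x - y))\<bar> + \<sigma> y * ln (norm x)"
        by (simp add: distrib_left)
      also have "\<sigma> y * ln (norm x) \<le> \<sigma> y * ln (2 + norm y)" using s0[of y] lx by (intro mult_left_mono) auto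
      also have "\<dots> \<le> ?B2" using ind1 s0[of y] l2 by simp
      finally show ?thesis using nn ll by linarith
    qed
  qed
qed


end

lemma tail_small:
  fixes f :: "real^2 \<Rightarrow> real"
  assumes f: "integrable lborel f" and e: "0 < e"
  shows "\<exists>R. \<forall>R'\<ge>R. \<bar>\<integral>y. f y * indicator {y. R' \<le> norm y} y \<partial>lborel\<bar> < e"
proof -
  have fm[measurable]: "f \<in> borel_measurable borel" using borel_measurable_integrable[OF f] by simp
  have "((\<lambda>R. \<integral>y. f y * indicator {y. R \<le> norm y} y \<partial>lborel) \<longlongrightarrow> integral\<^sup>L lborel (\<lambda>_::real^2. 0::real)) at_top"
  proof (rule integral_dominated_convergence_at_top[where w="\<lambda>y. \<bar>f y\<bar>" and M=lborel and s="\<lambda>R y. f y * indicator {y. R \<le> norm y} y" and f="\<lambda>_::real^2. 0::real"])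
    show "AE y in lborel. ((\<lambda>R. f y * indicator {y. R \<le> norm y} y) \<longlongrightarrow> 0) at_top"
    proof (intro AE_I2)
      fix y :: "real^2"
      have "eventually (\<lambda>R. f y * indicator {y. R \<le> norm y} y = 0) at_top"
        using eventually_gt_at_top[of "norm y"] by eventually_elim auto
      then show "((\<lambda>R. f y * indicator {y. R \<le> norm y} y) \<longlongrightarrow> 0) at_top" by (rule tendsto_eventually)
    qed
    show "\<forall>\<^sub>F R in at_top. AE y in lborel. norm (f y * indicator {y. R \<le> norm y} y) \<le> \<bar>f y\<bar>"
      by (intro always_eventually allI AE_I2) (auto simp: indicator_def)
  qed (auto intro: f integrable_abs)
  then have "eventually (\<lambda>R. \<bar>\<integral>y. f y * indicator {y. R \<le> norm y} y \<partial>lborel\<bar> < e) at_top"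
    using e by (auto simp: tendsto_iff dist_real_def)
  then show ?thesis by (simp add: eventually_at_top_linorder)
qed

lemma norm_ge_sets[measurable]: "{y::real^2. c \<le> norm y} \<in> sets borel"
  by (intro borel_closed closed_Collect_le) (auto intro: continuous_intros)

context dens begin

lemma N_asym: "((\<lambda>x. N x - integral\<^sup>L lborel \<sigma> * ln (norm x)) \<longlongrightarrow> 0) at_infinity"
  unfolding Lim_at_infinity
proof (intro allI impI)
  fix \<epsilon> :: real assume "0 < \<epsilon>"
  define e where "e = \<epsilon> / 5"
  have e: "0 < e" using \<open>0 < \<epsilon>\<close> by (simp add: e_def)
  define m where "m = integral\<^sup>L lborel \<sigma>"
  have m0: "0 \<le> m" unfolding m_def using s0 by simp
  obtain \<rho>0 where r0: "\<And>R'. \<rho>0 \<le> R' \<Longrightarrow> \<bar>\<integral>y. \<sigma> y * ln (2 + norm y) * indicator {y. R' \<le> norm y} y \<partial>lborel\<bar> < e"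
    using tail_small[OF sint e] by auto
  define \<rho> where "\<rho> = max 1 \<rho>0"
  have \<rho>: "1 \<le> \<rho>" "\<rho>0 \<le> \<rho>" by (auto simp: \<rho>_def)
  obtain \<eta> where eta: "0 < \<eta>" "\<eta> \<le> 1" "integral\<^sup>L lborel (kr \<eta>) < e"
    using kr_small[OF e] by auto
  define e2 where "e2 = e / (\<bar>ln \<eta>\<bar> + 1)"
  have e2: "0 < e2" using e by (simp add: e2_def add_pos_nonneg)
  obtain R0 where R0: "\<And>R'. R0 \<le> R' \<Longrightarrow> \<bar>\<integral>y. \<sigma> y * indicator {y. R' \<le> norm y} y \<partial>lborel\<bar> < e2"
    using tail_small[OF sig_int e2] by auto
  define b where "b = max (2 * \<rho>) (max (R0 + 1) (2 * \<rho> * m / e + 1))"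
  show "\<exists>b. \<forall>x. b \<le> norm x \<longrightarrow> dist (N x - integral\<^sup>L lborel \<sigma> * ln (norm x)) 0 < \<epsilon>"
  proof (intro exI[of _ b] allI impI)
    fix x :: "real^2" assume bx: "b \<le> norm x"
    have x1: "2 * \<rho> \<le> norm x" "R0 \<le> norm x - 1" "2 * \<rho> * m / e < norm x"
      using bx by (auto simp: b_def)
    have xpos: "0 < norm x" using x1 \<rho> by linarith
    define B1 where "B1 y = \<sigma> y * (2 * \<rho> / norm x)" for y
    define B2 where "B2 y = 2 * (\<sigma> y * ln (2 + norm y) * indicator {y. \<rho> \<le> norm y} y)" for y :: "real^2"
    define B3 where "B3 y = kr \<eta> (x - y)" for y
    define B4 where "B4 y = \<bar>ln \<eta>\<bar> * (\<sigma> y * indicator {y. norm x - 1 \<le> norm y} y)" for y :: "real^2"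
    have i1: "integrable lborel B1" unfolding B1_def by (intro integrable_mult_left sig_int)
    have i2: "integrable lborel B2" unfolding B2_def
      by (intro integrable_mult_right integrable_real_mult_indicator sint) measurable
    have i3: "integrable lborel B3" unfolding B3_def
      by (rule reflect_integrable) (auto intro: kr_integrable eta)
    have i4: "integrable lborel B4" unfolding B4_def
      by (intro integrable_mult_right integrable_real_mult_indicator sig_int) measurable
    have "N x - m * ln (norm x) = (\<integral>y. \<sigma> y * ln (norm (x - y)) - \<sigma> y * ln (norm x) \<partial>lborel)"
      unfolding N_def m_def
      by (subst Bochner_Integration.integral_diff) (auto intro: N_integrable integrable_mult_left sig_int)
    also have "\<dots> = (\<integral>y. \<sigma> y * (ln (norm (x - y)) - ln (norm x)) \<partial>lborel)"
      by (simp add: algebra_simps)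
    finally have eq: "N x - m * ln (norm x) = (\<integral>y. \<sigma> y * (ln (norm (x - y)) - ln (norm x)) \<partial>lborel)" .
    have "\<bar>N x - m * ln (norm x)\<bar> \<le> (\<integral>y. B1 y + B2 y + B3 y + B4 y \<partial>lborel)"
      unfolding eq real_norm_def[symmetric]
    proof (rule Bochner_Integration.integral_norm_bound_integral)
      show "integrable lborel (\<lambda>y. \<sigma> y * (ln (norm (x - y)) - ln (norm x)))"
        using Bochner_Integration.integrable_diff[OF N_integrable[of x] integrable_mult_left[OF sig_int, of "ln (norm x)"]]
        by (simp add: algebra_simps)
      show "integrable lborel (\<lambda>y. B1 y + B2 y + B3 y + B4 y)"
        by (intro Bochner_Integration.integrable_add i1 i2 i3 i4)
      show "norm (\<sigma> y * (ln (norm (x - y)) - ln (norm x))) \<le> B1 y + B2 y + B3 y + B4 y" for y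
        unfolding B1_def B2_def B3_def B4_def real_norm_def
        by (rule D_bound[OF \<rho>(1) x1(1) eta(1,2)])
    qed
    also have "\<dots> = integral\<^sup>L lborel B1 + integral\<^sup>L lborel B2 + integral\<^sup>L lborel B3 + integral\<^sup>L lborel B4"
      by (simp add: Bochner_Integration.integral_add i1 i2 i3 i4 Bochner_Integration.integrable_add)
    also have "integral\<^sup>L lborel B1 = m * (2 * \<rho> / norm x)" unfolding B1_def m_def by simp
    also have "integral\<^sup>L lborel B2 = 2 * (\<integral>y. \<sigma> y * ln (2 + norm y) * indicator {y. \<rho> \<le> norm y} y \<partial>lborel)"
      unfolding B2_def by simp
    also have "integral\<^sup>L lborel B3 = integral\<^sup>L lborel (kr \<eta>)"
      unfolding B3_def by (rule reflect_integral) simp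
    also have "integral\<^sup>L lborel B4 = \<bar>ln \<eta>\<bar> * (\<integral>y. \<sigma> y * indicator {y. norm x - 1 \<le> norm y} y \<partial>lborel)"
      unfolding B4_def by simp
    finally have bound: "\<bar>N x - m * ln (norm x)\<bar> \<le> m * (2 * \<rho> / norm x) + 2 * (\<integral>y. \<sigma> y * ln (2 + norm y) * indicator {y. \<rho> \<le> norm y} y \<partial>lborel)
        + integral\<^sup>L lborel (kr \<eta>) + \<bar>ln \<eta>\<bar> * (\<integral>y. \<sigma> y * indicator {y. norm x - 1 \<le> norm y} y \<partial>lborel)" .
    have t1: "m * (2 * \<rho> / norm x) < e"
    proof -
      have "2 * \<rho> * m < e * norm x" using x1(3) e by (simp add: field_simps)
      then show ?thesis using xpos by (simp add: field_simps)
    qed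
    have t2: "(\<integral>y. \<sigma> y * ln (2 + norm y) * indicator {y. \<rho> \<le> norm y} y \<partial>lborel) < e"
      using r0[OF \<rho>(2)] by linarith
    have t4: "\<bar>ln \<eta>\<bar> * (\<integral>y. \<sigma> y * indicator {y. norm x - 1 \<le> norm y} y \<partial>lborel) \<le> e"
    proof -
      have a: "(\<integral>y. \<sigma> y * indicator {y. norm x - 1 \<le> norm y} y \<partial>lborel) \<le> e2"
        using R0[OF x1(2)] by linarith
      have "\<bar>ln \<eta>\<bar> * (\<integral>y. \<sigma> y * indicator {y. norm x - 1 \<le> norm y} y \<partial>lborel) \<le> \<bar>ln \<eta>\<bar> * e2"
        using a by (intro mult_left_mono) auto
      also have "\<dots> \<le> e" unfolding e2_def using e
        by (simp add: field_simps add_pos_nonneg)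
      finally show ?thesis .
    qed
    have "\<bar>N x - m * ln (norm x)\<bar> < 5 * e" using bound t1 t2 t4 eta(3) by linarith
    then show "dist (N x - integral\<^sup>L lborel \<sigma> * ln (norm x)) 0 < \<epsilon>"
      by (simp add: dist_real_def e_def m_def)
  qed
qed

end




lemma deriv_ln_norm_vec:
  fixes x a :: "real^2"
  assumes "x \<noteq> a"
  shows "((\<lambda>x. ln (norm (x - a))) has_derivative (\<lambda>h. kvec (x - a) \<bullet> h)) (at x)"
proof -
  have ne: "x - a \<noteq> 0" using assms by simp
  have 1: "((\<lambda>x. x - a) has_derivative (\<lambda>h. h)) (at x)"
    by (auto intro!: derivative_eq_intros)
  have 2: "((\<lambda>x. norm (x - a)) has_derivative (\<lambda>h. h \<bullet> sgn (x - a))) (at x)"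
    using has_derivative_compose[OF 1 has_derivative_norm[OF ne]] by simp
  have 3: "((\<lambda>x. ln (norm (x - a))) has_derivative (\<lambda>h. h \<bullet> sgn (x - a) * inverse (norm (x - a)))) (at x)"
    using has_derivative_ln[OF _ 2] ne by simp
  have e: "(\<lambda>h. h \<bullet> sgn (x - a) * inverse (norm (x - a))) = (\<lambda>h. kvec (x - a) \<bullet> h)"
    by (rule ext) (simp add: kvec_def sgn_div_norm power2_eq_square inner_commute divide_inverse)
  show ?thesis using 3 unfolding e .
qed

lemma ln_ratio_lim:
  fixes a :: "real^2"
  shows "((\<lambda>x. ln (norm x) - ln (norm (x - a))) \<longlongrightarrow> 0) at_infinity"
  unfolding Lim_at_infinity
proof (intro allI impI)
  fix e :: real assume e: "0 < e"
  show "\<exists>b. \<forall>x. b \<le> norm x \<longrightarrow> dist (ln (norm x) - ln (norm (x - a))) 0 < e"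
  proof (intro exI[of _ "max (2 * norm a + 1) (2 * norm a / e + 1)"] allI impI)
    fix x :: "real^2" assume bx: "max (2 * norm a + 1) (2 * norm a / e + 1) \<le> norm x"
    then have x1: "2 * norm a + 1 \<le> norm x" "2 * norm a / e < norm x" by auto
    have xpos: "0 < norm x" using x1 norm_ge_zero[of a] by linarith
    have d1: "\<bar>norm (x - a) - norm x\<bar> \<le> norm a" using norm_triangle_ineq3[of "x - a" x] by simp
    have pos: "0 < norm (x - a)" using d1 x1 by linarith
    have "norm (x - a) / norm x - 1 = (norm (x - a) - norm x) / norm x"
      using xpos by (simp add: diff_divide_distrib)
    then have "\<bar>norm (x - a) / norm x - 1\<bar> = \<bar>norm (x - a) - norm x\<bar> / norm x"
      by (simp add: abs_divide)
    also have "\<dots> \<le> norm a / norm x" using d1 xpos by (intro divide_right_mono) auto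
    finally have u: "\<bar>norm (x - a) / norm x - 1\<bar> \<le> norm a / norm x" .
    have "norm a / norm x \<le> 1/2" using x1 xpos by (simp add: field_simps)
    then have "\<bar>ln (norm (x - a) / norm x)\<bar> \<le> 2 * \<bar>norm (x - a) / norm x - 1\<bar>"
      using u by (intro ln_near_one) linarith
    also have "\<dots> \<le> 2 * (norm a / norm x)" using u by simp
    also have "\<dots> < e"
    proof -
      have "2 * norm a < e * norm x" using x1(2) e by (simp add: field_simps)
      then show ?thesis using xpos by (simp add: field_simps)
    qed
    finally have "\<bar>ln (norm (x - a)) - ln (norm x)\<bar> < e" using pos xpos by (simp add: ln_div)
    then show "dist (ln (norm x) - ln (norm (x - a))) 0 < e" by (simp add: dist_real_def abs_minus_commute)
  qed
qed

lemma V_asym: "((\<lambda>x. V_nuc K xs x + real K * ln (norm x)) \<longlongrightarrow> 0) at_infinity"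
proof -
  have "((\<lambda>x. \<Sum>i<K. ln (norm x) - ln (norm (x - xs i))) \<longlongrightarrow> (\<Sum>i<K. 0)) at_infinity"
    by (intro tendsto_sum ln_ratio_lim)
  moreover have "(\<lambda>x. \<Sum>i<K. ln (norm x) - ln (norm (x - xs i))) = (\<lambda>x. V_nuc K xs x + real K * ln (norm x))"
    by (rule ext) (simp add: V_nuc_def sum_subtractf)
  ultimately show ?thesis by simp
qed

lemma V_deriv:
  assumes "x \<notin> xs ` {..<K}"
  shows "(V_nuc K xs has_derivative (\<lambda>h. - (\<Sum>i<K. kvec (x - xs i)) \<bullet> h)) (at x)"
proof -
  have "((\<lambda>x. - (\<Sum>i<K. ln (norm (x - xs i)))) has_derivative (\<lambda>h. - (\<Sum>i<K. kvec (x - xs i) \<bullet> h))) (at x)"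
    using assms by (intro has_derivative_minus has_derivative_sum deriv_ln_norm_vec) auto
  then show ?thesis unfolding V_nuc_def[abs_def] by (simp add: inner_sum_left)
qed

lemma kvec_cont: "continuous_on (- {a}) (\<lambda>x. kvec (x - a))"
  unfolding kvec_def by (intro continuous_intros) auto

lemma reduce:
  assumes "admissible_density \<sigma>0"
  obtains \<sigma> where "dens \<sigma>" "AE x in lborel. \<sigma>0 x = \<sigma> x"
proof -
  from assms have m0: "\<sigma>0 \<in> borel_measurable lebesgue" and b: "\<And>x. 0 \<le> \<sigma>0 x \<and> \<sigma>0 x \<le> 1"
    and i0: "integrable lebesgue (\<lambda>x. \<sigma>0 x * ln (2 + norm x))"
    by (auto simp: admissible_density_def)
  obtain g where gm: "g \<in> borel_measurable lborel" and ae: "AE x in lborel. \<sigma>0 x = g x"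
    using completion_ex_borel_measurable_real[OF m0] by auto
  define \<sigma> where "\<sigma> x = max 0 (min 1 (g x))" for x
  have sm[measurable]: "\<sigma> \<in> borel_measurable borel" unfolding \<sigma>_def using gm by measurable
  have ae2: "AE x in lborel. \<sigma>0 x = \<sigma> x"
    using ae
  proof eventually_elim
    fix x assume "\<sigma>0 x = g x"
    then show "\<sigma>0 x = \<sigma> x" using b[of x] by (simp add: \<sigma>_def)
  qed
  have "integrable lebesgue (\<lambda>x. \<sigma> x * ln (2 + norm x))"
  proof (rule integrable_cong_AE[THEN iffD1, OF _ _ _ i0])
    show "(\<lambda>x. \<sigma>0 x * ln (2 + norm x)) \<in> borel_measurable lebesgue"
    proof (intro borel_measurable_times m0 measurable_completion)
      show "(\<lambda>x::real^2. ln (2 + norm x)) \<in> borel_measurable lborel" by measurable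
    qed
    show "(\<lambda>x. \<sigma> x * ln (2 + norm x)) \<in> borel_measurable lebesgue"
      by (intro measurable_completion) measurable
    show "AE x in lebesgue. \<sigma>0 x * ln (2 + norm x) = \<sigma> x * ln (2 + norm x)"
      unfolding AE_completion_iff using ae2 by eventually_elim simp
  qed
  then have "integrable lborel (\<lambda>x. \<sigma> x * ln (2 + norm x))"
    by (subst (asm) integrable_completion) measurable
  then have "dens \<sigma>" using sm by unfold_locales (auto simp: \<sigma>_def)
  then show ?thesis using ae2 that by blast
qed

lemma transfer_int:
  fixes k :: "real^2 \<Rightarrow> real"
  assumes m0: "\<sigma>0 \<in> borel_measurable lebesgue" and sm: "\<sigma> \<in> borel_measurable borel"
    and ae: "AE x in lborel. \<sigma>0 x = \<sigma> x" and km: "k \<in> borel_measurable borel"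
  shows "integral\<^sup>L lebesgue (\<lambda>y. \<sigma>0 y * k y) = integral\<^sup>L lborel (\<lambda>y. \<sigma> y * k y)"
    and "integrable lebesgue (\<lambda>y. \<sigma>0 y * k y) \<longleftrightarrow> integrable lborel (\<lambda>y. \<sigma> y * k y)"
proof -
  have m1: "(\<lambda>y. \<sigma>0 y * k y) \<in> borel_measurable lebesgue"
  proof (intro borel_measurable_times m0 measurable_completion)
    show "k \<in> borel_measurable lborel" using km by simp
  qed
  have m2': "(\<lambda>y. \<sigma> y * k y) \<in> borel_measurable lborel" using sm km by measurable
  then have m2: "(\<lambda>y. \<sigma> y * k y) \<in> borel_measurable lebesgue" by (rule measurable_completion)
  have ae': "AE y in lebesgue. \<sigma>0 y * k y = \<sigma> y * k y"
    unfolding AE_completion_iff using ae by eventually_elim simp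
  show "integral\<^sup>L lebesgue (\<lambda>y. \<sigma>0 y * k y) = integral\<^sup>L lborel (\<lambda>y. \<sigma> y * k y)"
    using integral_cong_AE[OF m1 m2 ae'] integral_completion[OF m2'] by simp
  show "integrable lebesgue (\<lambda>y. \<sigma>0 y * k y) \<longleftrightarrow> integrable lborel (\<lambda>y. \<sigma> y * k y)"
    using integrable_cong_AE[OF m1 m2 ae'] integrable_completion[OF m2'] by simp
qed


lemma main_one:
  fixes K :: nat and xs :: "nat \<Rightarrow> real^2"
  assumes adm: "admissible_density \<sigma>0"
  shows "(\<forall>x. integrable lebesgue (\<lambda>y. \<sigma>0 y * ln (norm (x - y)))) \<and>
       continuous_on (- (xs ` {..<K})) (Phi K xs \<sigma>0) \<and>
       (\<exists>D :: real^2 \<Rightarrow> ((real^2) \<Rightarrow>\<^sub>L real).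
          (\<forall>x\<in>- (xs ` {..<K}). (Phi K xs \<sigma>0 has_derivative blinfun_apply (D x)) (at x)) \<and>
          continuous_on (- (xs ` {..<K})) D) \<and>
       ((\<lambda>x. Phi K xs \<sigma>0 x + (real K - integral\<^sup>L lebesgue \<sigma>0) * ln (norm x)) \<longlongrightarrow> 0) at_infinity"
proof -
  obtain \<sigma> where ds: "dens \<sigma>" and ae: "AE x in lborel. \<sigma>0 x = \<sigma> x"
    using reduce[OF adm] by blast
  interpret dens \<sigma> by (rule ds)
  have m0: "\<sigma>0 \<in> borel_measurable lebesgue" using adm by (simp add: admissible_density_def)
  have lnm: "(\<lambda>y. ln (norm (x - y))) \<in> borel_measurable borel" for x :: "real^2" by measurable
  have int: "integrable lebesgue (\<lambda>y. \<sigma>0 y * ln (norm (x - y)))" for x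
    using transfer_int(2)[OF m0 sm ae lnm[of x]] N_integrable[of x] by simp
  have Phi_eq: "Phi K xs \<sigma>0 = (\<lambda>x. V_nuc K xs x + N x)"
    by (rule ext) (simp add: Phi_def N_def transfer_int(1)[OF m0 sm ae lnm])
  have mass: "integral\<^sup>L lebesgue \<sigma>0 = integral\<^sup>L lborel \<sigma>"
    using transfer_int(1)[OF m0 sm ae, of "\<lambda>_. 1"] by simp
  define S where "S = - (xs ` {..<K})"
  define D where "D x = blinfun_inner_right (G x - (\<Sum>i<K. kvec (x - xs i)))" for x
  have deriv: "(Phi K xs \<sigma>0 has_derivative blinfun_apply (D x)) (at x)" if "x \<in> S" for x
  proof -
    have "x \<notin> xs ` {..<K}" using that by (simp add: S_def)
    from has_derivative_add[OF V_deriv[OF this] N_deriv[of x]]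
    have "((\<lambda>x. V_nuc K xs x + N x) has_derivative (\<lambda>h. - (\<Sum>i<K. kvec (x - xs i)) \<bullet> h + G x \<bullet> h)) (at x)" .
    moreover have "(\<lambda>h. - (\<Sum>i<K. kvec (x - xs i)) \<bullet> h + G x \<bullet> h) = blinfun_apply (D x)"
      by (rule ext) (simp add: D_def inner_diff_left)
    ultimately show ?thesis unfolding Phi_eq by simp
  qed
  have Dcont: "continuous_on S D"
    unfolding D_def
  proof (rule bounded_linear.continuous_on[OF bounded_linear_blinfun_inner_right])
    show "continuous_on S (\<lambda>x. G x - (\<Sum>i<K. kvec (x - xs i)))"
    proof (intro continuous_on_diff continuous_on_sum)
      show "continuous_on S G" using G_cont by (rule continuous_on_subset) auto
      fix i assume "i \<in> {..<K}"
      then have "S \<subseteq> - {xs i}" by (auto simp: S_def)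
      then show "continuous_on S (\<lambda>x. kvec (x - xs i))" using kvec_cont by (rule continuous_on_subset[rotated])
    qed
  qed
  have Pcont: "continuous_on S (Phi K xs \<sigma>0)"
    by (intro continuous_at_imp_continuous_on ballI) (rule has_derivative_continuous[OF deriv])
  have lim: "((\<lambda>x. Phi K xs \<sigma>0 x + (real K - integral\<^sup>L lebesgue \<sigma>0) * ln (norm x)) \<longlongrightarrow> 0) at_infinity"
  proof -
    have "((\<lambda>x. (V_nuc K xs x + real K * ln (norm x)) + (N x - integral\<^sup>L lborel \<sigma> * ln (norm x))) \<longlongrightarrow> 0 + 0) at_infinity"
      by (intro tendsto_add V_asym N_asym)
    moreover have "(\<lambda>x. (V_nuc K xs x + real K * ln (norm x)) + (N x - integral\<^sup>L lborel \<sigma> * ln (norm x)))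
        = (\<lambda>x. Phi K xs \<sigma>0 x + (real K - integral\<^sup>L lebesgue \<sigma>0) * ln (norm x))"
      by (rule ext) (simp add: Phi_eq mass algebra_simps)
    ultimately show ?thesis by simp
  qed
  show ?thesis using int Pcont deriv Dcont lim unfolding S_def by blast
qed

theorem lemma3p5:
  fixes K :: nat and xs :: "nat \<Rightarrow> real^2"
  assumes "K \<ge> 1"
  shows
   "(\<forall>\<sigma>\<in>M_TF K.
       (\<forall>x. integrable lebesgue (\<lambda>y. \<sigma> y * ln (norm (x - y)))) \<and>
       continuous_on (- (xs ` {..<K})) (Phi K xs \<sigma>) \<and>
       (\<exists>D :: real^2 \<Rightarrow> ((real^2) \<Rightarrow>\<^sub>L real).
          (\<forall>x\<in>- (xs ` {..<K}). (Phi K xs \<sigma> has_derivative blinfun_apply (D x)) (at x)) \<and>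
          continuous_on (- (xs ` {..<K})) D) \<and>
       (Phi K xs \<sigma> \<longlongrightarrow> 0) at_infinity)
    \<and>
    (\<forall>\<sigma>. admissible_density \<sigma> \<and> integral\<^sup>L lebesgue \<sigma> < real K \<longrightarrow>
       ((\<lambda>x. Phi K xs \<sigma> x + (real K - integral\<^sup>L lebesgue \<sigma>) * ln (norm x)) \<longlongrightarrow> 0)
         at_infinity)"
proof (rule conjI)
  show "\<forall>\<sigma>\<in>M_TF K.
       (\<forall>x. integrable lebesgue (\<lambda>y. \<sigma> y * ln (norm (x - y)))) \<and>
       continuous_on (- (xs ` {..<K})) (Phi K xs \<sigma>) \<and>
       (\<exists>D :: real^2 \<Rightarrow> ((real^2) \<Rightarrow>\<^sub>L real).
          (\<forall>x\<in>- (xs ` {..<K}). (Phi K xs \<sigma> has_derivative blinfun_apply (D x)) (at x)) \<and>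
          continuous_on (- (xs ` {..<K})) D) \<and>
       (Phi K xs \<sigma> \<longlongrightarrow> 0) at_infinity"
  proof (rule ballI)
    fix \<sigma> assume "\<sigma> \<in> M_TF K"
    then have adm: "admissible_density \<sigma>" and mass: "integral\<^sup>L lebesgue \<sigma> = real K"
      by (auto simp: M_TF_def)
    note M = main_one[OF adm, of xs K]
    have "((\<lambda>x. Phi K xs \<sigma> x + (real K - integral\<^sup>L lebesgue \<sigma>) * ln (norm x)) \<longlongrightarrow> 0) at_infinity"
      using M by blast
    then have "(Phi K xs \<sigma> \<longlongrightarrow> 0) at_infinity" using mass by simp
    then show "(\<forall>x. integrable lebesgue (\<lambda>y. \<sigma> y * ln (norm (x - y)))) \<and>
       continuous_on (- (xs ` {..<K})) (Phi K xs \<sigma>) \<and>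
       (\<exists>D :: real^2 \<Rightarrow> ((real^2) \<Rightarrow>\<^sub>L real).
          (\<forall>x\<in>- (xs ` {..<K}). (Phi K xs \<sigma> has_derivative blinfun_apply (D x)) (at x)) \<and>
          continuous_on (- (xs ` {..<K})) D) \<and>
       (Phi K xs \<sigma> \<longlongrightarrow> 0) at_infinity" using M by blast
  qed
next
  show "\<forall>\<sigma>. admissible_density \<sigma> \<and> integral\<^sup>L lebesgue \<sigma> < real K \<longrightarrow>
       ((\<lambda>x. Phi K xs \<sigma> x + (real K - integral\<^sup>L lebesgue \<sigma>) * ln (norm x)) \<longlongrightarrow> 0)
         at_infinity"
    using main_one[of _ xs K] by blast
qed


end
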